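(* Let $(\Omega,\mathcal F,\Pr)$ be a probability space with filtration $\{\mathcal F_n\}_{n\ge0}$, and let $\{z_n\},\{a_n\},\{x_n\},\{y_n\}$ be non-negative adapted sequences with $\mathbb{E}[z_{n+1}\mid\mathcal F_n]\le(1+a_n)z_n+x_n-y_n$ a.s. Suppose $\sum_na_n<\infty$ a.s.; $|z_{n+1}-z_n|\le b_n(z_n+1)$ a.s. for a non-negative adapted sequence $\{b_n\}$ with $\sum_nb_n^2<\infty$ a.s.; and there is a constant $B\ge0$ such that $z_n>B$ implies $x_n-y_n\le -c_n(z_n-B)$, for a non-negative adapted sequence $\{c_n\}$ with $\sum_nc_n=\infty$ a.s. Assume in addition there is a constant $\eta>0$ with (A1) $\liminf_{n\to\infty} nc_n>\frac{\eta}{2}$; (A2) $\sum_n (n+1)^\eta(a_n^2+b_n)<\infty$ a.s. Then $\lim_{n\to\infty} n^{\eta/2} d(z_n,[0,B])=0$ a.s.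
   Context: For $z\in\mathbb R$ and an interval $Z\subset\mathbb R$, $d(z,Z)\doteq\inf_{\tilde z\in Z}|z-\tilde z|$. *)

theory Defs
  imports "HOL-Probability.Probability"
begin

definition dist_set :: "real \<Rightarrow> real set \<Rightarrow> real" where
  "dist_set t Z = infdist t Z"

end

theory Submission
  imports Defs
begin

lemma tail_zero:
  fixes f :: "nat \<Rightarrow> real"
  assumes "summable f"
  shows "(\<lambda>n. suminf (\<lambda>k. f (k + n))) \<longlonglongrightarrow> 0"
proof -
  have "(\<lambda>n. suminf f - (\<Sum>i<n. f i)) \<longlonglongrightarrow> suminf f - suminf f"
    by (intro tendsto_diff tendsto_const summable_LIMSEQ assms)
  then show ?thesis using suminf_minus_initial_segment[OF assms] by simp
qed

lemma pathwise:
  fixes z a b c :: "nat \<Rightarrow> real" and B \<eta> :: real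
  assumes nz: "\<And>n. 0 \<le> z n" and na: "\<And>n. 0 \<le> a n" and nb: "\<And>n. 0 \<le> b n"
    and nc: "\<And>n. 0 \<le> c n"
    and inc: "\<And>n. \<bar>z (Suc n) - z n\<bar> \<le> b n * (z n + 1)"
    and dr: "\<And>n. z n > B \<Longrightarrow> c n * (z n - B) \<le> a n * z n + b n * (z n + 1)"
    and sa: "summable a" and sb: "summable (\<lambda>n. (real n + 1) powr \<eta> * b n)"
    and sc: "\<not> summable c" and eta: "\<eta> > 0" and B: "B \<ge> 0"
  shows "(\<lambda>n. real n powr (\<eta>/2) * dist_set (z n) {0..B}) \<longlonglongrightarrow> 0"
proof -
  have ge1: "1 \<le> (real n + 1) powr \<eta>" for n
    using eta by (intro ge_one_powr_ge_zero) auto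
  have sb1: "summable b"
  proof (rule summable_comparison_test[OF _ sb])
    show "\<exists>N. \<forall>n\<ge>N. norm (b n) \<le> (real n + 1) powr \<eta> * b n"
      using ge1 nb by (auto intro!: exI[of _ 0]) (metis mult_right_mono mult_1 nb)
  qed
  define S where "S = suminf b"
  define K where "K = (z 0 + 1) * exp S"
  have zK0: "z n + 1 \<le> (z 0 + 1) * exp (\<Sum>k<n. b k)" for n
  proof (induction n)
    case 0 then show ?case by simp
  next
    case (Suc n)
    have "z (Suc n) + 1 \<le> (1 + b n) * (z n + 1)"
      using inc[of n] by (simp add: algebra_simps abs_le_iff)
    also have "\<dots> \<le> exp (b n) * ((z 0 + 1) * exp (\<Sum>k<n. b k))"
      using Suc nz[of n] nb[of n] exp_ge_add_one_self[of "b n"]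
      by (intro mult_mono) (auto simp: add.commute)
    also have "\<dots> = (z 0 + 1) * exp (\<Sum>k<Suc n. b k)"
      by (simp add: exp_add mult_ac)
    finally show ?case .
  qed
  have zK: "z n + 1 \<le> K" for n
  proof -
    have "(\<Sum>k<n. b k) \<le> S" unfolding S_def by (rule sum_le_suminf[OF sb1]) (auto simp: nb)
    then have "(z 0 + 1) * exp (\<Sum>k<n. b k) \<le> K" unfolding K_def
      using nz[of 0] by (intro mult_left_mono) auto
    then show ?thesis using zK0[of n] by linarith
  qed
  have Kpos: "K \<ge> 1" using zK[of 0] nz[of 0] by simp
  have step: "\<bar>z (Suc n) - z n\<bar> \<le> K * b n" for n
    using inc[of n] zK[of n] nb[of n] by (smt (verit) mult_left_mono mult.commute)
  define T where "T n = suminf (\<lambda>k. b (k + n))" for n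
  have sbn: "summable (\<lambda>k. b (k + n))" for n by (rule summable_ignore_initial_segment[OF sb1])
  have T0: "T \<longlonglongrightarrow> 0" unfolding T_def by (rule tail_zero[OF sb1])
  have diffj: "\<bar>z (n + j) - z n\<bar> \<le> K * (\<Sum>k<j. b (k + n))" for n j
  proof (induction j)
    case 0 then show ?case by simp
  next
    case (Suc j)
    have "\<bar>z (n + Suc j) - z n\<bar> \<le> \<bar>z (Suc (n + j)) - z (n + j)\<bar> + \<bar>z (n + j) - z n\<bar>" by simp
    also have "\<dots> \<le> K * b (j + n) + K * (\<Sum>k<j. b (k + n))"
      using step[of "n + j"] Suc by (simp add: add.commute)
    finally show ?case by (simp add: algebra_simps)
  qed
  have diff: "\<bar>z m - z n\<bar> \<le> K * T n" if nm: "n \<le> m" for n m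
  proof -
    obtain j where m: "m = n + j" using le_Suc_ex[OF nm] by blast
    have "(\<Sum>k<j. b (k + n)) \<le> T n" unfolding T_def
      by (rule sum_le_suminf[OF sbn]) (simp_all add: nb)
    then have "K * (\<Sum>k<j. b (k + n)) \<le> K * T n" using Kpos by (intro mult_left_mono) auto
    then show ?thesis using diffj[of n j] m by simp
  qed
  have "Cauchy z"
  proof (rule metric_CauchyI)
    fix e :: real assume e: "e > 0"
    have pos: "e / (2 * K) > 0" using e Kpos by simp
    obtain N where N: "\<bar>T N\<bar> < e / (2 * K)"
      using T0[unfolded LIMSEQ_iff, rule_format, OF pos] by auto
    have KT: "K * T N < e / 2" using N Kpos by (simp add: field_simps abs_less_iff)
    show "\<exists>M. \<forall>m\<ge>M. \<forall>n\<ge>M. dist (z m) (z n) < e"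
    proof (intro exI allI impI)
      fix m n assume "N \<le> m" "N \<le> n"
      then show "dist (z m) (z n) < e" using diff[of N m] diff[of N n] KT
        by (simp add: dist_real_def)
    qed
  qed
  then obtain L where L: "z \<longlonglongrightarrow> L" using Cauchy_convergent_iff convergent_def by blast
  have tailb: "\<bar>z n - L\<bar> \<le> K * T n" for n
  proof -
    have "(\<lambda>m. \<bar>z m - z n\<bar>) \<longlonglongrightarrow> \<bar>L - z n\<bar>" by (intro tendsto_intros L)
    then have "\<bar>L - z n\<bar> \<le> K * T n"
      by (rule LIMSEQ_le_const2) (auto intro!: exI[of _ n] diff)
    then show ?thesis by simp
  qed
  have L0: "L \<ge> 0" using L nz by (intro LIMSEQ_le_const) auto
  have LB: "L \<le> B"
  proof (rule ccontr)
    assume "\<not> L \<le> B"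
    then have LB: "L > B" by simp
    define \<epsilon> where "\<epsilon> = (L - B) / 2"
    have ep: "\<epsilon> > 0" using LB by (simp add: \<epsilon>_def)
    have "eventually (\<lambda>n. z n > B + \<epsilon>) sequentially"
      using L LB by (intro order_tendstoD(1)) (auto simp: \<epsilon>_def field_simps)
    then have ev: "eventually (\<lambda>n. norm (c n) \<le> (K / \<epsilon>) * (a n + b n)) sequentially"
    proof (rule eventually_mono)
      fix n assume zn: "z n > B + \<epsilon>"
      have "c n * \<epsilon> \<le> c n * (z n - B)" using zn nc[of n] by (intro mult_left_mono) auto
      also have "\<dots> \<le> a n * z n + b n * (z n + 1)" using dr[of n] zn ep by simp
      also have "\<dots> \<le> a n * K + b n * K" using zK[of n] nz[of n] na[of n] nb[of n]
        by (intro add_mono mult_left_mono) auto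
      finally have "c n * \<epsilon> \<le> K * (a n + b n)" by (simp add: algebra_simps)
      then show "norm (c n) \<le> (K / \<epsilon>) * (a n + b n)" using ep nc[of n]
        by (simp add: field_simps)
    qed
    have "summable (\<lambda>n. (K / \<epsilon>) * (a n + b n))"
      by (intro summable_mult summable_add sa sb1)
    then have "summable c" by (rule summable_comparison_test_ev[OF ev])
    then show False using sc by simp
  qed
  define U where "U n = suminf (\<lambda>k. (real (k + n) + 1) powr \<eta> * b (k + n))" for n
  have U0: "U \<longlonglongrightarrow> 0" unfolding U_def using tail_zero[OF sb] by simp
  have bound: "\<bar>real n powr (\<eta>/2) * dist_set (z n) {0..B}\<bar> \<le> K * U n" for n
  proof -
    have d0: "0 \<le> dist_set (z n) {0..B}" by (simp add: dist_set_def infdist_nonneg)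
    have d1: "dist_set (z n) {0..B} \<le> \<bar>z n - L\<bar>"
      unfolding dist_set_def using L0 LB
      by (metis atLeastAtMost_iff dist_real_def infdist_le)
    have pw: "real n powr (\<eta>/2) \<le> (real (k + n) + 1) powr \<eta>" for k
    proof -
      have "real n powr (\<eta>/2) \<le> (real (k + n) + 1) powr (\<eta>/2)"
        using eta by (intro powr_mono2) auto
      also have "\<dots> \<le> (real (k + n) + 1) powr \<eta>"
        using eta by (intro powr_mono) auto
      finally show ?thesis .
    qed
    have TU: "real n powr (\<eta>/2) * T n \<le> U n"
    proof -
      have "real n powr (\<eta>/2) * T n = suminf (\<lambda>k. real n powr (\<eta>/2) * b (k + n))"
        unfolding T_def by (rule suminf_mult[OF sbn, symmetric])
      also have "\<dots> \<le> U n" unfolding U_def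
      proof (rule suminf_le)
        show "real n powr (\<eta>/2) * b (k + n) \<le> (real (k + n) + 1) powr \<eta> * b (k + n)" for k
          by (rule mult_right_mono[OF pw nb])
        show "summable (\<lambda>k. real n powr (\<eta>/2) * b (k + n))" by (rule summable_mult[OF sbn])
        show "summable (\<lambda>k. (real (k + n) + 1) powr \<eta> * b (k + n))"
          using summable_ignore_initial_segment[OF sb, of n] by simp
      qed
      finally show ?thesis .
    qed
    have "\<bar>real n powr (\<eta>/2) * dist_set (z n) {0..B}\<bar> = real n powr (\<eta>/2) * dist_set (z n) {0..B}"
      using d0 by simp
    also have "\<dots> \<le> real n powr (\<eta>/2) * (K * T n)"
      using d1 tailb[of n] by (intro mult_left_mono) auto
    also have "\<dots> = K * (real n powr (\<eta>/2) * T n)" by simp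
    also have "\<dots> \<le> K * U n" using TU Kpos by (intro mult_left_mono) auto
    finally show ?thesis .
  qed
  have ev: "\<forall>\<^sub>F n in sequentially. norm (real n powr (\<eta>/2) * dist_set (z n) {0..B}) \<le> K * U n"
    by (rule always_eventually) (metis bound real_norm_def)
  have KU: "(\<lambda>n. K * U n) \<longlonglongrightarrow> 0" using tendsto_mult[OF tendsto_const U0, of K] by simp
  show ?thesis by (rule Lim_null_comparison[OF ev KU])
qed

theorem theorem5:
  fixes M :: "'a measure" and F :: "nat \<Rightarrow> 'a measure"
    and z a x y b c :: "nat \<Rightarrow> 'a \<Rightarrow> real" and B \<eta> :: real
  assumes prob: "prob_space M"
    and filt: "filtration (space M) F"
    and sub: "\<And>n. subalgebra M (F n)"
    and adapted: "\<And>n. z n \<in> borel_measurable (F n)" "\<And>n. a n \<in> borel_measurable (F n)"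
      "\<And>n. x n \<in> borel_measurable (F n)" "\<And>n. y n \<in> borel_measurable (F n)"
      "\<And>n. b n \<in> borel_measurable (F n)" "\<And>n. c n \<in> borel_measurable (F n)"
    and nonneg: "\<And>n \<omega>. \<omega> \<in> space M \<Longrightarrow>
        0 \<le> z n \<omega> \<and> 0 \<le> a n \<omega> \<and> 0 \<le> x n \<omega> \<and> 0 \<le> y n \<omega> \<and> 0 \<le> b n \<omega> \<and> 0 \<le> c n \<omega>"
    and RS: "\<And>n. AE \<omega> in M.
        0 \<le> (1 + a n \<omega>) * z n \<omega> + x n \<omega> - y n \<omega> \<and>
        nn_cond_exp M (F n) (\<lambda>\<omega>. ennreal (z (Suc n) \<omega>)) \<omega>
          \<le> ennreal ((1 + a n \<omega>) * z n \<omega> + x n \<omega> - y n \<omega>)"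
    and sum_a: "AE \<omega> in M. summable (\<lambda>n. a n \<omega>)"
    and incr: "\<And>n. AE \<omega> in M. \<bar>z (Suc n) \<omega> - z n \<omega>\<bar> \<le> b n \<omega> * (z n \<omega> + 1)"
    and sum_b2: "AE \<omega> in M. summable (\<lambda>n. (b n \<omega>)\<^sup>2)"
    and B: "B \<ge> 0"
    and drift: "\<And>n. AE \<omega> in M. z n \<omega> > B \<longrightarrow> x n \<omega> - y n \<omega> \<le> - c n \<omega> * (z n \<omega> - B)"
    and sum_c: "AE \<omega> in M. \<not> summable (\<lambda>n. c n \<omega>)"
    and eta: "\<eta> > 0"
    and A1: "AE \<omega> in M. liminf (\<lambda>n. ereal (real n * c n \<omega>)) > ereal (\<eta> / 2)"
    and A2: "AE \<omega> in M. summable (\<lambda>n. (real n + 1) powr \<eta> * ((a n \<omega>)\<^sup>2 + b n \<omega>))"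
  shows "AE \<omega> in M. (\<lambda>n. real n powr (\<eta> / 2) * dist_set (z n \<omega>) {0..B}) \<longlonglongrightarrow> 0"
proof -
  interpret prob_space M by (rule prob)
  have fm: "finite_measure M" using prob unfolding prob_space_def by simp
  have sfs: "sigma_finite_subalgebra M (F n)" for n
    by (rule finite_measure_subalgebra_is_sigma_finite)
       (simp add: finite_measure_subalgebra_def finite_measure_subalgebra_axioms_def fm sub)
  have lower: "AE \<omega> in M. ennreal (z n \<omega> - b n \<omega> * (z n \<omega> + 1))
      \<le> nn_cond_exp M (F n) (\<lambda>\<omega>. ennreal (z (Suc n) \<omega>)) \<omega>" for n
  proof -
    interpret S: sigma_finite_subalgebra M "F n" by (rule sfs)
    have [measurable]: "z n \<in> borel_measurable (F n)" "b n \<in> borel_measurable (F n)"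
      using adapted by auto
    have [measurable]: "z n \<in> borel_measurable M" "b n \<in> borel_measurable M"
      "z (Suc n) \<in> borel_measurable M"
      using adapted measurable_from_subalg[OF sub] by blast+
    have m1: "(\<lambda>\<omega>. ennreal (z n \<omega> - b n \<omega> * (z n \<omega> + 1))) \<in> borel_measurable (F n)"
      by measurable
    have e1: "AE \<omega> in M. ennreal (z n \<omega> - b n \<omega> * (z n \<omega> + 1))
        = nn_cond_exp M (F n) (\<lambda>\<omega>. ennreal (z n \<omega> - b n \<omega> * (z n \<omega> + 1))) \<omega>"
      by (rule S.nn_cond_exp_F_meas[OF m1])
    have "AE \<omega> in M. ennreal (z n \<omega> - b n \<omega> * (z n \<omega> + 1)) \<le> ennreal (z (Suc n) \<omega>)"
      using incr[of n] by eventually_elim (auto intro!: ennreal_leI simp: abs_le_iff)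
    then have e2: "AE \<omega> in M. nn_cond_exp M (F n) (\<lambda>\<omega>. ennreal (z n \<omega> - b n \<omega> * (z n \<omega> + 1))) \<omega>
        \<le> nn_cond_exp M (F n) (\<lambda>\<omega>. ennreal (z (Suc n) \<omega>)) \<omega>"
      by (rule S.nn_cond_exp_mono) measurable
    from e1 e2 show ?thesis by eventually_elim simp
  qed
  have all: "AE \<omega> in M. \<forall>n.
      (0 \<le> (1 + a n \<omega>) * z n \<omega> + x n \<omega> - y n \<omega> \<and>
        nn_cond_exp M (F n) (\<lambda>\<omega>. ennreal (z (Suc n) \<omega>)) \<omega>
          \<le> ennreal ((1 + a n \<omega>) * z n \<omega> + x n \<omega> - y n \<omega>)) \<and>
      ennreal (z n \<omega> - b n \<omega> * (z n \<omega> + 1))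
        \<le> nn_cond_exp M (F n) (\<lambda>\<omega>. ennreal (z (Suc n) \<omega>)) \<omega> \<and>
      \<bar>z (Suc n) \<omega> - z n \<omega>\<bar> \<le> b n \<omega> * (z n \<omega> + 1) \<and>
      (z n \<omega> > B \<longrightarrow> x n \<omega> - y n \<omega> \<le> - c n \<omega> * (z n \<omega> - B))"
    unfolding AE_all_countable
  proof
    fix n
    show "AE \<omega> in M. (0 \<le> (1 + a n \<omega>) * z n \<omega> + x n \<omega> - y n \<omega> \<and>
        nn_cond_exp M (F n) (\<lambda>\<omega>. ennreal (z (Suc n) \<omega>)) \<omega>
          \<le> ennreal ((1 + a n \<omega>) * z n \<omega> + x n \<omega> - y n \<omega>)) \<and>
      ennreal (z n \<omega> - b n \<omega> * (z n \<omega> + 1))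
        \<le> nn_cond_exp M (F n) (\<lambda>\<omega>. ennreal (z (Suc n) \<omega>)) \<omega> \<and>
      \<bar>z (Suc n) \<omega> - z n \<omega>\<bar> \<le> b n \<omega> * (z n \<omega> + 1) \<and>
      (z n \<omega> > B \<longrightarrow> x n \<omega> - y n \<omega> \<le> - c n \<omega> * (z n \<omega> - B))"
      using RS[of n] lower[of n] incr[of n] drift[of n] by eventually_elim blast
  qed
  from all sum_a sum_c A2 AE_space show ?thesis
  proof eventually_elim
    case (elim \<omega>)
    note nn = nonneg[OF elim(5)]
    show ?case
    proof (rule pathwise[where a="\<lambda>n. a n \<omega>" and c="\<lambda>n. c n \<omega>" and b="\<lambda>n. b n \<omega>"])
      show "0 \<le> z n \<omega>" "0 \<le> a n \<omega>" "0 \<le> b n \<omega>" "0 \<le> c n \<omega>" for n using nn by auto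
      show "\<bar>z (Suc n) \<omega> - z n \<omega>\<bar> \<le> b n \<omega> * (z n \<omega> + 1)" for n using elim(1) by blast
      show "summable (\<lambda>n. a n \<omega>)" by (rule elim(2))
      show "\<not> summable (\<lambda>n. c n \<omega>)" by (rule elim(3))
      show "0 < \<eta>" by (rule eta)
      show "0 \<le> B" by (rule B)
      show "summable (\<lambda>n. (real n + 1) powr \<eta> * b n \<omega>)"
      proof (rule summable_comparison_test[OF _ elim(4)])
        show "\<exists>N. \<forall>n\<ge>N. norm ((real n + 1) powr \<eta> * b n \<omega>) \<le> (real n + 1) powr \<eta> * ((a n \<omega>)\<^sup>2 + b n \<omega>)"
          using nn by (auto intro!: exI[of _ 0] mult_left_mono)
      qed
      show "c n \<omega> * (z n \<omega> - B) \<le> a n \<omega> * z n \<omega> + b n \<omega> * (z n \<omega> + 1)" if zB: "z n \<omega> > B" for n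
      proof -
        from elim(1) have h: "0 \<le> (1 + a n \<omega>) * z n \<omega> + x n \<omega> - y n \<omega>"
          "nn_cond_exp M (F n) (\<lambda>\<omega>. ennreal (z (Suc n) \<omega>)) \<omega>
          \<le> ennreal ((1 + a n \<omega>) * z n \<omega> + x n \<omega> - y n \<omega>)"
          "ennreal (z n \<omega> - b n \<omega> * (z n \<omega> + 1))
        \<le> nn_cond_exp M (F n) (\<lambda>\<omega>. ennreal (z (Suc n) \<omega>)) \<omega>"
          "x n \<omega> - y n \<omega> \<le> - c n \<omega> * (z n \<omega> - B)"
          using zB by blast+
        have "ennreal (z n \<omega> - b n \<omega> * (z n \<omega> + 1)) \<le> ennreal ((1 + a n \<omega>) * z n \<omega> + x n \<omega> - y n \<omega>)"
          using h(2,3) by (rule order_trans[rotated])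
        then have "z n \<omega> - b n \<omega> * (z n \<omega> + 1) \<le> (1 + a n \<omega>) * z n \<omega> + x n \<omega> - y n \<omega>"
          using h(1) by simp
        then show ?thesis using h(4) by (simp add: algebra_simps)
      qed
    qed
  qed
qed

end
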